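(* Let $\mathcal{G}=(\mathcal{V},\mathcal{E})$ be an undirected graph with $n$ nodes and $E$ edges, with incidence matrix $A\in\mathbb{R}^{n\times E}$. For each node $i$ let $f_i:\mathbb{R}\to\mathbb{R}$ be $M_i$-smooth and $\mu_i$-strongly convex, and let $F(\lambda)=\sum_{i=1}^n f_i^*(u_i^T A\lambda)$ for $\lambda\in\mathbb{R}^E$. Then for every $\lambda\in\mathbb{R}^E$, $$\|\nabla F(\lambda)\|_2=\|\nabla F(\lambda)\|_{A^+A}=\|\nabla F(\lambda)\|_{A^+A}^*.$$
   Context: The incidence matrix $A$ has, in each column $\ell$ (edge $\ell\equiv(i,j)$), one entry $+1$ and one entry $-1$ in the rows of the endpoints $i,j$ (signs arbitrary), and zeros elsewhere. $u_i$ is the $i$-th standard basis vector of $\mathbb{R}^n$; $f_i^*(y)=\sup_x(yx-f_i(x))$ is the Fenchel conjugate. $A^+$ denotes the Moore–Penrose pseudo-inverse of $A$. The semi-norm $\|x\|_{A^+A}$ is $(x^TA^+Ax)^{1/2}$, and its dual is $\|z\|_{A^+A}^*=\sup_{x\in\mathbb{R}^E}\{z^Tx : \|x\|_{A^+A}\le 1\}$. *)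

theory Defs
  imports "HOL-Analysis.Analysis" "HOL-Library.Extended_Real"
begin

definition undirected_graph :: "('e \<Rightarrow> 'n set) \<Rightarrow> bool" where
  "undirected_graph ends \<longleftrightarrow> (\<forall>l. card (ends l) = 2) \<and> inj ends"

definition incidence_matrix :: "('e \<Rightarrow> 'n set) \<Rightarrow> real^'e^'n \<Rightarrow> bool" where
  "incidence_matrix ends A \<longleftrightarrow>
     (\<forall>l. \<exists>i j. ends l = {i, j} \<and> i \<noteq> j \<and> A$i$l = 1 \<and> A$j$l = -1 \<and>
                (\<forall>k. k \<noteq> i \<and> k \<noteq> j \<longrightarrow> A$k$l = 0))"

definition smooth_with :: "real \<Rightarrow> (real \<Rightarrow> real) \<Rightarrow> bool" where
  "smooth_with M f \<longleftrightarrow> (\<exists>f'. (\<forall>x. (f has_real_derivative f' x) (at x)) \<and>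
       (\<forall>x y. \<bar>f' x - f' y\<bar> \<le> M * \<bar>x - y\<bar>))"

definition strongly_convex :: "real \<Rightarrow> (real \<Rightarrow> real) \<Rightarrow> bool" where
  "strongly_convex \<mu> f \<longleftrightarrow> (\<forall>x y t. 0 \<le> t \<and> t \<le> 1 \<longrightarrow>
       f (t * x + (1 - t) * y) \<le> t * f x + (1 - t) * f y - \<mu> / 2 * t * (1 - t) * (x - y)^2)"

definition fenchel_conj :: "(real \<Rightarrow> real) \<Rightarrow> real \<Rightarrow> real" where
  "fenchel_conj f y = (SUP x. y * x - f x)"

definition pinv :: "real^'c^'r \<Rightarrow> real^'r^'c" where
  "pinv A = (THE X. A ** X ** A = A \<and> X ** A ** X = X \<and>
                    transpose (A ** X) = A ** X \<and> transpose (X ** A) = X ** A)"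

definition seminorm_PA :: "real^'e^'n \<Rightarrow> real^'e \<Rightarrow> real" where
  "seminorm_PA A x = sqrt (x \<bullet> ((pinv A ** A) *v x))"

definition dual_seminorm_PA :: "real^'e^'n \<Rightarrow> real^'e \<Rightarrow> ereal" where
  "dual_seminorm_PA A z = (SUP x \<in> {x. seminorm_PA A x \<le> 1}. ereal (z \<bullet> x))"

end

theory Submission
  imports Defs
begin


definition prj :: "'a::euclidean_space set \<Rightarrow> 'a \<Rightarrow> 'a" where
  "prj S x = (SOME y. y \<in> S \<and> (\<forall>w\<in>S. (x - y) \<bullet> w = 0))"

lemma prj_props:
  assumes "subspace S"
  shows "prj S x \<in> S \<and> (\<forall>w\<in>S. (x - prj S x) \<bullet> w = 0)"
proof -
  have sS: "span S = S" using assms by (simp add: span_eq_iff)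
  obtain y z where yz: "y \<in> span S" "\<And>w. w \<in> span S \<Longrightarrow> orthogonal z w" "x = y + z"
    using orthogonal_subspace_decomp_exists by blast
  have "y \<in> S" using yz(1) sS by simp
  moreover have "\<forall>w\<in>S. (x - y) \<bullet> w = 0"
    using yz sS by (simp add: orthogonal_def)
  ultimately have "\<exists>y. y \<in> S \<and> (\<forall>w\<in>S. (x - y) \<bullet> w = 0)" by blast
  then show ?thesis unfolding prj_def by (rule someI_ex)
qed

lemma prj_unique:
  assumes "subspace S" "y \<in> S" "\<forall>w\<in>S. (x - y) \<bullet> w = 0"
  shows "prj S x = y"
proof -
  let ?p = "prj S x"
  have p: "?p \<in> S" "\<forall>w\<in>S. (x - ?p) \<bullet> w = 0" using prj_props[OF assms(1)] by auto
  have d: "?p - y \<in> S" using p assms by (simp add: subspace_diff)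
  have e1: "(x - y) \<bullet> (?p - y) = 0" using d assms by auto
  have e2: "(x - ?p) \<bullet> (?p - y) = 0" using d p by auto
  have "(?p - y) = (x - y) - (x - ?p)" by simp
  then have "(?p - y) \<bullet> (?p - y) = (x - y) \<bullet> (?p - y) - (x - ?p) \<bullet> (?p - y)"
    by (metis inner_diff_left)
  then have "(?p - y) \<bullet> (?p - y) = 0" using e1 e2 by simp
  then show ?thesis by simp
qed

lemma prj_id: "subspace S \<Longrightarrow> x \<in> S \<Longrightarrow> prj S x = x"
  by (rule prj_unique) auto

lemma prj_in: "subspace S \<Longrightarrow> prj S x \<in> S"
  using prj_props by blast

lemma prj_orth: "subspace S \<Longrightarrow> w \<in> S \<Longrightarrow> (x - prj S x) \<bullet> w = 0"
  using prj_props by blast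

lemma prj_sym:
  assumes "subspace S"
  shows "prj S x \<bullet> z = x \<bullet> prj S z"
proof -
  have "(z - prj S z) \<bullet> prj S x = 0"
    using prj_orth[OF assms prj_in[OF assms]] by blast
  then have "z \<bullet> prj S x = prj S z \<bullet> prj S x"
    by (simp add: inner_diff_left)
  then have a: "prj S x \<bullet> z = prj S x \<bullet> prj S z"
    by (simp add: inner_commute)
  have "(x - prj S x) \<bullet> prj S z = 0"
    using prj_orth[OF assms prj_in[OF assms]] by blast
  then have b: "x \<bullet> prj S z = prj S x \<bullet> prj S z"
    by (simp add: inner_diff_left)
  show ?thesis using a b by simp
qed

lemma prj_add:
  assumes "subspace S"
  shows "prj S (x + y) = prj S x + prj S y"
proof (rule prj_unique[OF assms])
  show "prj S x + prj S y \<in> S" using prj_in[OF assms] assms by (simp add: subspace_add)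
  show "\<forall>w\<in>S. (x + y - (prj S x + prj S y)) \<bullet> w = 0"
  proof
    fix w assume w: "w \<in> S"
    have "x + y - (prj S x + prj S y) = (x - prj S x) + (y - prj S y)" by simp
    then show "(x + y - (prj S x + prj S y)) \<bullet> w = 0"
      using prj_orth[OF assms w] by (simp only: inner_add_left)
  qed
qed

lemma prj_scale:
  assumes "subspace S"
  shows "prj S (c *\<^sub>R x) = c *\<^sub>R prj S x"
proof (rule prj_unique[OF assms])
  show "c *\<^sub>R prj S x \<in> S" using prj_in[OF assms] assms by (simp add: subspace_scale)
  show "\<forall>w\<in>S. (c *\<^sub>R x - c *\<^sub>R prj S x) \<bullet> w = 0"
  proof
    fix w assume w: "w \<in> S"
    have "c *\<^sub>R x - c *\<^sub>R prj S x = c *\<^sub>R (x - prj S x)" by (simp add: scaleR_diff_right)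
    then show "(c *\<^sub>R x - c *\<^sub>R prj S x) \<bullet> w = 0"
      using prj_orth[OF assms w] by simp
  qed
qed

lemma linear_prj: "subspace S \<Longrightarrow> linear (prj S)"
  by (simp add: linearI prj_add prj_scale)



definition RS :: "real^'e^'n \<Rightarrow> (real^'e) set" where
  "RS A = range (\<lambda>v. transpose A *v v)"
definition WS :: "real^'e^'n \<Rightarrow> (real^'n) set" where
  "WS A = range (\<lambda>x. A *v x)"

lemma subspace_RS: "subspace (RS A)"
  unfolding RS_def by (rule linear_subspace_image) auto
lemma subspace_WS: "subspace (WS A)"
  unfolding WS_def by (rule linear_subspace_image) auto

lemma tr_inner: "(transpose A *v v) \<bullet> z = v \<bullet> (A *v (z::real^'e))"
  by (simp add: dot_lmul_matrix)

lemma kerorth: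
  fixes A :: "real^'e^'n"
  assumes "\<forall>w\<in>RS A. z \<bullet> w = 0"
  shows "A *v z = 0"
proof -
  have "(transpose A *v (A *v z)) \<bullet> z = 0"
    using assms unfolding RS_def by (simp add: inner_commute del: transpose_matrix_vector)
  then show ?thesis by (simp add: dot_lmul_matrix)
qed

lemma orthker:
  fixes A :: "real^'e^'n"
  assumes "A *v z = 0" "w \<in> RS A"
  shows "z \<bullet> w = 0"
  using assms unfolding RS_def by (auto simp: inner_commute[of z] dot_lmul_matrix)

lemma A_prjRS: "A *v prj (RS A) x = A *v x"
proof -
  have "A *v (x - prj (RS A) x) = 0"
    by (rule kerorth) (simp add: prj_orth subspace_RS)
  then show ?thesis by (simp add: matrix_vector_mult_diff_distrib)
qed

lemma inj_RS:
  fixes A :: "real^'e^'n"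
  assumes "r \<in> RS A" "r' \<in> RS A" "A *v r = A *v r'"
  shows "r = r'"
proof -
  have d: "r - r' \<in> RS A" using subspace_diff[OF subspace_RS assms(1,2)] .
  have "A *v (r - r') = 0" using assms by (simp add: matrix_vector_mult_diff_distrib)
  then have "(r - r') \<bullet> (r - r') = 0" using orthker d by blast
  then show ?thesis by simp
qed

definition gfun :: "real^'e^'n \<Rightarrow> real^'n \<Rightarrow> real^'e" where
  "gfun A y = prj (RS A) (SOME x. A *v x = prj (WS A) y)"

lemma A_gfun: "A *v gfun A y = prj (WS A) y"
proof -
  have "prj (WS A) y \<in> WS A" by (simp add: prj_in subspace_WS)
  then have "\<exists>x. A *v x = prj (WS A) y" unfolding WS_def by auto
  then have "A *v (SOME x. A *v x = prj (WS A) y) = prj (WS A) y" by (rule someI_ex)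
  then show ?thesis unfolding gfun_def by (simp add: A_prjRS)
qed

lemma gfun_in: "gfun A y \<in> RS A"
  unfolding gfun_def by (simp add: prj_in subspace_RS)

lemma gfun_add: "gfun A (x + y) = gfun A x + gfun A y"
  apply (rule inj_RS[of _ A])
    apply (rule gfun_in)
   apply (simp add: gfun_in subspace_RS subspace_add)
  by (simp add: A_gfun matrix_vector_right_distrib prj_add subspace_WS)

lemma gfun_scale: "gfun A (c *\<^sub>R x) = c *\<^sub>R gfun A x"
  apply (rule inj_RS[of _ A])
    apply (rule gfun_in)
   apply (simp add: gfun_in subspace_RS subspace_scale)
  by (simp add: A_gfun prj_scale subspace_WS matrix_vector_mult_scaleR)

lemma linear_gfun: "linear (gfun A)"
  by (simp add: linearI gfun_add gfun_scale)

lemma gfun_A: "gfun A (A *v x) = prj (RS A) x"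
  apply (rule inj_RS[of _ A])
    apply (rule gfun_in)
   apply (simp add: prj_in subspace_RS)
proof -
  have "A *v x \<in> WS A" by (simp add: WS_def)
  then show "A *v gfun A (A *v x) = A *v prj (RS A) x"
    by (simp add: A_gfun A_prjRS prj_id subspace_WS)
qed

lemma sym_mat:
  fixes M :: "real^'a^'a"
  assumes "\<And>x y. (M *v x) \<bullet> y = x \<bullet> (M *v y)"
  shows "transpose M = M"
proof -
  have "transpose M *v x = M *v x" for x
  proof -
    have "\<forall>y. (transpose M *v x - M *v x) \<bullet> y = 0"
      using assms by (simp add: inner_diff_left dot_lmul_matrix)
    then show ?thesis by (metis inner_eq_zero_iff eq_iff_diff_eq_0)
  qed
  then show ?thesis by (simp add: matrix_eq)
qed

definition penrose :: "real^'e^'n \<Rightarrow> real^'n^'e \<Rightarrow> bool" where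
  "penrose A X \<longleftrightarrow> A ** X ** A = A \<and> X ** A ** X = X \<and>
                    transpose (A ** X) = A ** X \<and> transpose (X ** A) = X ** A"

lemma penrose_exists: "\<exists>X. penrose A X"
proof -
  let ?X = "matrix (gfun A)"
  have X: "?X *v y = gfun A y" for y
    by (simp add: matrix_works linear_gfun linear_matrix_vector_mul_eq)
  have 1: "A ** ?X ** A = A"
  proof -
    have "A *v gfun A (A *v x) = A *v x" for x
      using prj_id[OF subspace_WS, of "A *v x" A] by (simp add: A_gfun WS_def)
    then show ?thesis by (simp add: matrix_eq X flip: matrix_vector_mul_assoc)
  qed
  have 2: "?X ** A ** ?X = ?X"
  proof -
    have "gfun A (A *v gfun A y) = gfun A y" for y
      by (simp add: gfun_A prj_id subspace_RS gfun_in)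
    then show ?thesis by (simp add: matrix_eq X flip: matrix_vector_mul_assoc)
  qed
  have 3: "transpose (A ** ?X) = A ** ?X"
    by (rule sym_mat) (simp add: X A_gfun prj_sym subspace_WS flip: matrix_vector_mul_assoc)
  have 4: "transpose (?X ** A) = ?X ** A"
    by (rule sym_mat) (simp add: X gfun_A prj_sym subspace_RS flip: matrix_vector_mul_assoc)
  show ?thesis using 1 2 3 4 unfolding penrose_def by blast
qed

lemma penrose_unique:
  assumes "penrose A X" "penrose A Y"
  shows "X = Y"
proof -
  have a1: "A ** X ** A = A" and a2: "X ** A ** X = X" and a3: "transpose (A ** X) = A ** X"
    and a4: "transpose (X ** A) = X ** A" using assms(1) unfolding penrose_def by auto
  have b1: "A ** Y ** A = A" and b2: "Y ** A ** Y = Y" and b3: "transpose (A ** Y) = A ** Y"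
    and b4: "transpose (Y ** A) = Y ** A" using assms(2) unfolding penrose_def by auto
  have "X = X ** (A ** X)" using a2 by (simp add: matrix_mul_assoc)
  also have "\<dots> = X ** transpose (A ** X)" using a3 by simp
  also have "\<dots> = X ** (transpose X ** transpose (A ** Y ** A))" using b1 by (simp add: matrix_transpose_mul)
  also have "\<dots> = X ** (transpose X ** (transpose A ** transpose (A ** Y)))" by (simp add: matrix_transpose_mul)
  also have "\<dots> = X ** (transpose (A ** X) ** transpose (A ** Y))" by (simp add: matrix_transpose_mul matrix_mul_assoc)
  also have "\<dots> = X ** ((A ** X) ** (A ** Y))" using a3 b3 by simp
  also have "\<dots> = (X ** A ** X) ** A ** Y" by (simp add: matrix_mul_assoc)
  also have "\<dots> = X ** A ** Y" using a2 by simp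
  finally have x: "X = X ** A ** Y" .
  have "Y = (Y ** A) ** Y" using b2 by simp
  also have "\<dots> = transpose (Y ** A) ** Y" using b4 by simp
  also have "\<dots> = (transpose (A ** X ** A) ** transpose Y) ** Y" using a1 by (simp add: matrix_transpose_mul)
  also have "\<dots> = (transpose (X ** A) ** transpose A ** transpose Y) ** Y" by (simp add: matrix_transpose_mul matrix_mul_assoc)
  also have "\<dots> = (transpose (X ** A) ** transpose (Y ** A)) ** Y" by (simp add: matrix_transpose_mul matrix_mul_assoc)
  also have "\<dots> = X ** A ** (Y ** A ** Y)" using a4 b4 by (simp add: matrix_mul_assoc)
  also have "\<dots> = X ** A ** Y" using b2 by simp
  finally show ?thesis using x by simp
qed

lemma pinv_penrose: "penrose A (pinv A)"
proof -
  have "\<exists>!X. penrose A X" using penrose_exists penrose_unique by blast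
  then have "penrose A (THE X. penrose A X)" by (rule theI')
  then show ?thesis unfolding pinv_def penrose_def[symmetric] .
qed



lemma conj_deriv:
  fixes f :: "real \<Rightarrow> real"
  assumes sm: "smooth_with M f" and mu: "\<mu> > 0" and sc: "strongly_convex \<mu> f"
  shows "\<exists>D. (fenchel_conj f has_real_derivative D) (at y)"
proof -
  obtain f' where d: "\<And>x. (f has_real_derivative f' x) (at x)"
    and L: "\<And>x y. \<bar>f' x - f' y\<bar> \<le> M * \<bar>x - y\<bar>"
    using sm unfolding smooth_with_def by blast
  define g where "g x = f x - \<mu> / 2 * x^2" for x
  have cvx: "convex_on UNIV g"
  proof (rule convex_onI)
    fix t x y :: real assume t: "0 < t" "t < 1"
    have s: "f ((1 - t) * x + (1 - (1 - t)) * y) \<le> (1 - t) * f x + (1 - (1 - t)) * f y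
           - \<mu> / 2 * (1 - t) * (1 - (1 - t)) * (x - y)^2"
    proof -
      have tt: "0 \<le> 1 - t \<and> 1 - t \<le> 1" using t by simp
      show ?thesis using sc tt unfolding strongly_convex_def by blast
    qed
    have id: "((1 - t) * x + t * y)^2 = (1 - t) * x^2 + t * y^2 - (1 - t) * t * (x - y)^2"
      by (simp add: power2_eq_square algebra_simps)
    have id2: "\<mu> * ((1 - t) * x + t * y)^2 = (1 - t) * (\<mu> * x^2) + t * (\<mu> * y^2) - \<mu> * (1 - t) * t * (x - y)^2"
      by (simp add: power2_eq_square algebra_simps)
    show "g ((1 - t) *\<^sub>R x + t *\<^sub>R y) \<le> (1 - t) * g x + t * g y"
      using s id2 unfolding g_def by (simp add: field_simps)
  qed auto
  have gd: "(g has_real_derivative (f' a - \<mu> * a)) (at a)" for a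
    unfolding g_def[abs_def] by (auto intro!: derivative_eq_intros d)
  have T: "f b \<ge> f a + f' a * (b - a) + \<mu> / 2 * (b - a)^2" for a b
  proof -
    have "g b - g a \<ge> (f' a - \<mu> * a) * (b - a)"
      by (rule convex_on_imp_above_tangent[OF cvx]) (use gd in auto)
    then show ?thesis unfolding g_def by (simp add: power2_eq_square algebra_simps)
  qed
  have mono: "(f' b - f' a) * (b - a) \<ge> \<mu> * ((b - a) * (b - a))" for a b
    using T[of a b] T[of b a] by (simp add: power2_eq_square algebra_simps)
  have mono2: "f' b - f' a \<ge> \<mu> * (b - a)" if "a \<le> b" for a b
  proof (cases "a = b")
    case False
    then have p: "b - a > 0" using that by simp
    have "(\<mu> * (b - a)) * (b - a) \<le> (f' b - f' a) * (b - a)" using mono[of b a] by (simp add: algebra_simps)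
    then show ?thesis using mult_le_cancel_right_pos[OF p] by blast
  qed simp
  have cont: "continuous_on S f'" for S
  proof -
    have "(max M 0)-lipschitz_on S f'"
    proof (rule lipschitz_onI)
      fix x y assume "x \<in> S" "y \<in> S"
      have "\<bar>f' x - f' y\<bar> \<le> max M 0 * \<bar>x - y\<bar>"
        using L[of x y] by (smt (verit) abs_ge_zero mult_right_mono max.cobounded1)
      then show "dist (f' x) (f' y) \<le> max M 0 * dist x y" by (simp add: dist_real_def)
    qed simp
    then show ?thesis by (rule lipschitz_on_continuous_on)
  qed
  have surj: "\<exists>x. f' x = t" for t
  proof (cases "t \<ge> f' 0")
    case True
    define a where "a = (t - f' 0) / \<mu>"
    have a0: "a \<ge> 0" using True mu unfolding a_def by simp
    have "f' a - f' 0 \<ge> \<mu> * a" using mono2[OF a0] by simp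
    then have "f' a \<ge> t" using mu unfolding a_def by simp
    then show ?thesis using IVT'[of f' 0 t a, OF True _ a0 cont] by blast
  next
    case False
    define a where "a = (t - f' 0) / \<mu>"
    have a0: "a \<le> 0" using False mu unfolding a_def by (simp add: divide_nonpos_pos)
    have "f' 0 - f' a \<ge> \<mu> * (0 - a)" using mono2[OF a0] by simp
    then have "f' a \<le> t" using mu unfolding a_def by simp
    then show ?thesis using IVT'[of f' a t 0, OF _ _ a0 cont] False by auto
  qed
  define xs where "xs t = (SOME x. f' x = t)" for t
  have xs: "f' (xs t) = t" for t unfolding xs_def by (rule someI_ex[OF surj])
  have bnd: "t * x - f x \<le> t * xs t - f (xs t)" for t x
  proof -
    have "f x \<ge> f (xs t) + t * (x - xs t) + \<mu> / 2 * (x - xs t)^2" using T[of "xs t" x] xs by simp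
    moreover have "\<mu> / 2 * (x - xs t)^2 \<ge> 0" using mu by simp
    ultimately show ?thesis by (simp add: algebra_simps)
  qed
  have Fc: "fenchel_conj f t = t * xs t - f (xs t)" for t
    unfolding fenchel_conj_def
    by (rule cSup_eq_maximum) (use bnd in auto)
  have lipx: "\<mu> * \<bar>xs z - xs w\<bar> \<le> \<bar>z - w\<bar>" for z w
  proof (cases "xs z = xs w")
    case False
    have m: "(z - w) * (xs z - xs w) \<ge> \<mu> * ((xs z - xs w) * (xs z - xs w))"
      using mono[of "xs w" "xs z"] xs by (simp add: algebra_simps)
    have "\<mu> * \<bar>xs z - xs w\<bar> * \<bar>xs z - xs w\<bar> \<le> \<bar>z - w\<bar> * \<bar>xs z - xs w\<bar>"
    proof -
      have "\<mu> * \<bar>xs z - xs w\<bar> * \<bar>xs z - xs w\<bar> = \<mu> * ((xs z - xs w) * (xs z - xs w))"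
        by (simp add: abs_mult_self_eq mult.assoc)
      also have "\<dots> \<le> (z - w) * (xs z - xs w)" using m .
      also have "\<dots> \<le> \<bar>(z - w) * (xs z - xs w)\<bar>" by simp
      finally show ?thesis by (simp add: abs_mult)
    qed
    moreover have "\<bar>xs z - xs w\<bar> > 0" using False by simp
    ultimately show ?thesis using mult_le_cancel_right_pos by blast
  qed simp
  have est: "\<bar>fenchel_conj f z - fenchel_conj f y - (z - y) * xs y\<bar> \<le> \<bar>z - y\<bar> * \<bar>xs z - xs y\<bar>" for z
  proof -
    have lo: "fenchel_conj f z - fenchel_conj f y - (z - y) * xs y \<ge> 0"
      using bnd[of z "xs y"] unfolding Fc by (simp add: algebra_simps)
    have hi: "fenchel_conj f z - fenchel_conj f y - (z - y) * xs y \<le> (z - y) * (xs z - xs y)"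
      using bnd[of y "xs z"] unfolding Fc by (simp add: algebra_simps)
    have "(z - y) * (xs z - xs y) \<le> \<bar>z - y\<bar> * \<bar>xs z - xs y\<bar>" by (metis abs_ge_self abs_mult)
    then show ?thesis using lo hi by linarith
  qed
  have "((\<lambda>z. (fenchel_conj f z - fenchel_conj f y) / (z - y)) \<longlongrightarrow> xs y) (at y)"
  proof (rule LIM_I)
    fix r :: real assume r: "r > 0"
    show "\<exists>s>0. \<forall>z. z \<noteq> y \<and> norm (z - y) < s \<longrightarrow>
            norm ((fenchel_conj f z - fenchel_conj f y) / (z - y) - xs y) < r"
    proof (intro exI[of _ "\<mu> * r"] conjI allI impI)
      show "\<mu> * r > 0" using mu r by simp
      fix z assume z: "z \<noteq> y \<and> norm (z - y) < \<mu> * r"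
      have nz: "\<bar>z - y\<bar> > 0" using z by simp
      have eq: "(fenchel_conj f z - fenchel_conj f y) / (z - y) - xs y
          = (fenchel_conj f z - fenchel_conj f y - (z - y) * xs y) / (z - y)"
        using z by (simp add: field_simps)
      have "\<bar>(fenchel_conj f z - fenchel_conj f y - (z - y) * xs y) / (z - y)\<bar>
          \<le> \<bar>xs z - xs y\<bar>"
        using est[of z] nz by (simp add: abs_divide divide_le_eq mult.commute)
      also have "\<dots> \<le> \<bar>z - y\<bar> / \<mu>" using lipx[of z y] mu by (simp add: le_divide_eq mult.commute)
      also have "\<dots> < r" using z mu by (simp add: divide_less_eq mult.commute)
      finally show "norm ((fenchel_conj f z - fenchel_conj f y) / (z - y) - xs y) < r"
        using eq by simp
    qed
  qed
  then show ?thesis using has_field_derivative_iff by blast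
qed



theorem lemma3:
  fixes ends :: "'e::finite \<Rightarrow> 'n::finite set"
    and A :: "real^'e^'n"
    and f :: "'n \<Rightarrow> real \<Rightarrow> real"
    and M \<mu> :: "'n \<Rightarrow> real"
    and F :: "real^'e \<Rightarrow> real"
  assumes "undirected_graph ends"
    and "incidence_matrix ends A"
    and "\<And>i. smooth_with (M i) (f i)"
    and "\<And>i. \<mu> i > 0"
    and "\<And>i. strongly_convex (\<mu> i) (f i)"
    and "\<And>lam. F lam = (\<Sum>i\<in>UNIV. fenchel_conj (f i) ((A *v lam) $ i))"
  shows "\<exists>g. GDERIV F lam :> g \<and> norm g = seminorm_PA A g
             \<and> ereal (seminorm_PA A g) = dual_seminorm_PA A g"
proof -
  have Feq: "F = (\<lambda>lam. \<Sum>i\<in>UNIV. fenchel_conj (f i) ((A *v lam) $ i))"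
    using assms(6) by (rule ext)
  have "\<forall>i. \<exists>D. (fenchel_conj (f i) has_real_derivative D) (at ((A *v lam) $ i))"
    using conj_deriv[OF assms(3) assms(4) assms(5)] by blast
  then obtain D where D: "\<And>i. (fenchel_conj (f i) has_real_derivative D i) (at ((A *v lam) $ i))"
    by metis
  have blA: "bounded_linear (\<lambda>l. A *v l)"
    using matrix_vector_mul_linear linear_linear by blast
  have bl: "bounded_linear (\<lambda>l. (A *v l) $ i)" for i
    by (rule bounded_linear_compose[OF bounded_linear_vec_nth blA])
  have termd: "((\<lambda>l. fenchel_conj (f i) ((A *v l) $ i)) has_derivative (\<lambda>k. D i * (A *v k) $ i)) (at lam)" for i
    using has_derivative_compose[OF bounded_linear_imp_has_derivative[OF bl] D[unfolded has_field_derivative_def]] .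
  have sumd: "(F has_derivative (\<lambda>k. \<Sum>i\<in>UNIV. D i * (A *v k) $ i)) (at lam)"
    unfolding Feq by (rule has_derivative_sum) (rule termd)
  define v where "v = (\<chi> i. D i)"
  define g where "g = transpose A *v v"
  have lin: "(\<lambda>k. \<Sum>i\<in>UNIV. D i * (A *v k) $ i) = (\<lambda>k. k \<bullet> g)"
  proof
    fix k
    have "k \<bullet> g = v \<bullet> (A *v k)" unfolding g_def
      by (simp add: inner_commute[of k] dot_lmul_matrix)
    also have "\<dots> = (\<Sum>i\<in>UNIV. D i * (A *v k) $ i)" unfolding v_def by (simp add: inner_vec_def)
    finally show "(\<Sum>i\<in>UNIV. D i * (A *v k) $ i) = k \<bullet> g" by simp
  qed
  have GD: "GDERIV F lam :> g" unfolding gderiv_def using sumd lin by simp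
  define X where "X = pinv A"
  define P where "P = pinv A ** A"
  have pen: "A ** X ** A = A" "X ** A ** X = X" "transpose (X ** A) = X ** A"
    using pinv_penrose[of A] unfolding penrose_def X_def by auto
  have Psym: "transpose P = P" using pen(3) unfolding P_def X_def .
  have AP: "A ** P = A" using pen(1) unfolding P_def X_def by (simp add: matrix_mul_assoc)
  have PP: "P ** P = P" using pen(2) unfolding P_def X_def by (simp add: matrix_mul_assoc)
  have PAt: "P ** transpose A = transpose A"
    by (metis AP Psym matrix_transpose_mul)
  have Pg: "P *v g = g" unfolding g_def
    by (simp add: matrix_vector_mul_assoc PAt del: transpose_matrix_vector)
  have Pt: "P *v x = x v* P" for x
    by (metis Psym vector_transpose_matrix)
  have semi: "seminorm_PA A x = norm (P *v x)" for x
  proof -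
    have "(P *v x) \<bullet> (P *v x) = x \<bullet> (P *v (P *v x))"
      by (simp add: Pt dot_lmul_matrix del: transpose_matrix_vector)
    also have "\<dots> = x \<bullet> (P *v x)" by (simp add: matrix_vector_mul_assoc PP)
    finally show ?thesis unfolding seminorm_PA_def P_def[symmetric] by (simp add: norm_eq_sqrt_inner)
  qed
  have gx: "g \<bullet> x = g \<bullet> (P *v x)" for x
  proof -
    have "g \<bullet> x = (P *v g) \<bullet> x" using Pg by simp
    also have "\<dots> = g \<bullet> (P *v x)" by (simp add: Pt dot_lmul_matrix del: transpose_matrix_vector)
    finally show ?thesis .
  qed
  have n1: "norm g = seminorm_PA A g" using semi Pg by simp
  have n2: "ereal (seminorm_PA A g) = dual_seminorm_PA A g"
  proof (rule antisym)
    show "dual_seminorm_PA A g \<le> ereal (seminorm_PA A g)"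
      unfolding dual_seminorm_PA_def
    proof (rule SUP_least)
      fix x assume "x \<in> {x. seminorm_PA A x \<le> 1}"
      then have x1: "norm (P *v x) \<le> 1" using semi by simp
      have "g \<bullet> x \<le> norm g * norm (P *v x)" using gx norm_cauchy_schwarz by metis
      also have "\<dots> \<le> norm g" using x1 by (simp add: mult_left_le)
      finally show "ereal (g \<bullet> x) \<le> ereal (seminorm_PA A g)" using n1 by simp
    qed
  next
    show "ereal (seminorm_PA A g) \<le> dual_seminorm_PA A g"
      unfolding dual_seminorm_PA_def
    proof (cases "g = 0")
      case True
      have "(0::real^'e) \<in> {x. seminorm_PA A x \<le> 1}" using semi by simp
      then show "ereal (seminorm_PA A g) \<le> (SUP x\<in>{x. seminorm_PA A x \<le> 1}. ereal (g \<bullet> x))"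
        by (rule SUP_upper2) (simp add: True semi)
    next
      case False
      define u where "u = g /\<^sub>R norm g"
      have Pu: "P *v u = u" unfolding u_def by (simp add: matrix_vector_mult_scaleR Pg)
      have "norm u = 1" using False unfolding u_def by simp
      then have "u \<in> {x. seminorm_PA A x \<le> 1}" using semi Pu by simp
      moreover have "g \<bullet> u = norm g" using False unfolding u_def
        by (simp add: inner_commute dot_square_norm power2_eq_square)
      ultimately show "ereal (seminorm_PA A g) \<le> (SUP x\<in>{x. seminorm_PA A x \<le> 1}. ereal (g \<bullet> x))"
        using n1 by (intro SUP_upper2[of u]) auto
    qed
  qed
  show ?thesis using GD n1 n2 by blast
qed

end
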